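(* A function $g\in\mathcal{G}$ is slow-jumping if and only if there exists a sub-polynomial function $h$ such that for all positive integers $x<y$ we have $g(y)\le \lfloor y/x\rfloor^2\, h(\lfloor y/x\rfloor x)\, g(x)$.
   Context: $\mathcal{G}=\{g:\mathbb{Z}_{\ge0}\to\mathbb{R}: g(0)=0,\ g(1)=1,\ g(x)>0\ \forall x>0\}$. A function $f:\mathbb{R}_{\ge0}\to\mathbb{R}_{\ge0}$ is sub-polynomial if for every $\alpha>0$, $\lim_{x\to\infty}x^\alpha f(x)=\infty$ and $\lim_{x\to\infty}x^{-\alpha}f(x)=0$. $g$ is slow-jumping if for every $\alpha>0$ there is $N>0$ such that for all positive integers $x<y$ with $y\ge N$, $g(y)\le \lfloor y/x\rfloor^{2+\alpha}x^\alpha g(x)$. *)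

theory Defs
  imports Complex_Main
begin

definition class_G :: "(nat \<Rightarrow> real) set" where
  "class_G = {g. g 0 = 0 \<and> g 1 = 1 \<and> (\<forall>x>0. g x > 0)}"

text \<open>A function from the nonnegative reals to the nonnegative reals, represented as a
  real function whose values on negative arguments are irrelevant.\<close>
definition sub_polynomial :: "(real \<Rightarrow> real) \<Rightarrow> bool" where
  "sub_polynomial f \<longleftrightarrow>
     (\<forall>x\<ge>0. f x \<ge> 0) \<and>
     (\<forall>\<alpha>>0. filterlim (\<lambda>x. x powr \<alpha> * f x) at_top at_top \<and>
             ((\<lambda>x. x powr (-\<alpha>) * f x) \<longlongrightarrow> 0) at_top)"

definition slow_jumping :: "(nat \<Rightarrow> real) \<Rightarrow> bool" where
  "slow_jumping g \<longleftrightarrow>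
     (\<forall>\<alpha>>0. \<exists>N::nat>0. \<forall>x y::nat. 0 < x \<and> x < y \<and> y \<ge> N \<longrightarrow>
        g y \<le> real (y div x) powr (2 + \<alpha>) * real x powr \<alpha> * g x)"

end

theory Submission
  imports Defs "HOL-Real_Asymp.Real_Asymp"
begin

definition Sset :: "(nat \<Rightarrow> real) \<Rightarrow> nat \<Rightarrow> real set" where
  "Sset g n = (\<lambda>(x,y). g y / (real (y div x) ^ 2 * g x)) `
      {(x,y). 0<x \<and> x<y \<and> y \<le> 2*n \<and> (y div x)*x = n}"

lemma Sset_finite: "finite (Sset g n)"
proof -
  have "{(x,y). 0<x \<and> x<y \<and> y \<le> 2*n \<and> (y div x)*x = n} \<subseteq> {..2*n} \<times> {..2*n}"
  proof
    fix p assume "p \<in> {(x,y). 0<x \<and> x<y \<and> y \<le> 2*n \<and> (y div x)*x = n}"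
    then obtain x y where "p = (x,y)" "x < y" "y \<le> 2*n" by blast
    thus "p \<in> {..2*n} \<times> {..2*n}" by simp
  qed
  then show ?thesis unfolding Sset_def
    by (meson finite_SigmaI finite_atMost finite_imageI finite_subset)
qed

definition hh :: "(nat \<Rightarrow> real) \<Rightarrow> real \<Rightarrow> real" where
  "hh g t = Max (insert 1 (Sset g (nat \<lfloor>t\<rfloor>)))"

lemma hh_ge1: "hh g t \<ge> 1"
  unfolding hh_def by (simp add: Sset_finite)

lemma ratio_bound:
  fixes x y :: nat and a :: real
  assumes gx: "g x > 0" and x: "0 < x" "x < y"
    and b: "g y \<le> real (y div x) powr (2 + a) * real x powr a * g x"
  shows "g y / (real (y div x) ^ 2 * g x) \<le> real ((y div x) * x) powr a"
proof -
  have q: "y div x \<ge> 1" using x by (simp add: div_le_mono div_self[symmetric] Suc_le_eq div_greater_zero_iff)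
  hence qp: "real (y div x) > 0" by simp
  have "real (y div x) powr (2 + a) = real (y div x) ^ 2 * real (y div x) powr a"
    using qp by (simp add: powr_add powr_realpow)
  hence "g y \<le> real (y div x) ^ 2 * g x * (real (y div x) powr a * real x powr a)"
    using b by (simp add: algebra_simps)
  hence "g y / (real (y div x) ^ 2 * g x) \<le> real (y div x) powr a * real x powr a"
    using qp gx by (simp add: divide_le_eq mult.commute)
  also have "\<dots> = real ((y div x) * x) powr a"
    by (simp add: powr_mult)
  finally show ?thesis .
qed

theorem proposition16:
  fixes g :: "nat \<Rightarrow> real"
  assumes "g \<in> class_G"
  shows "slow_jumping g \<longleftrightarrow>
    (\<exists>h. sub_polynomial h \<and>
       (\<forall>x y::nat. 0 < x \<and> x < y \<longrightarrow>
          g y \<le> real (y div x) ^ 2 * h (real ((y div x) * x)) * g x))"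
proof
  have gpos: "\<And>x. x > 0 \<Longrightarrow> g x > 0" using assms by (simp add: class_G_def)
  assume sj: "slow_jumping g"
  show "\<exists>h. sub_polynomial h \<and>
       (\<forall>x y::nat. 0 < x \<and> x < y \<longrightarrow>
          g y \<le> real (y div x) ^ 2 * h (real ((y div x) * x)) * g x)"
  proof (intro exI conjI allI impI)
    fix x y :: nat assume xy: "0 < x \<and> x < y"
    have q: "y div x \<ge> 1" using xy by (simp add: div_greater_zero_iff Suc_le_eq)
    hence qp: "real (y div x) > 0" by simp
    have "y < (y div x + 1) * x" using xy
      by (metis add.commute div_mult_mod_eq mod_less_divisor mult_Suc nat_add_left_cancel_less plus_1_eq_Suc)
    also have "\<dots> \<le> 2 * ((y div x) * x)" using q by simp
    finally have "(x,y) \<in> {(x,y). 0<x \<and> x<y \<and> y \<le> 2*((y div x)*x) \<and> (y div x)*x = (y div x)*x}"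
      using xy by auto
    hence "g y / (real (y div x) ^ 2 * g x) \<in> Sset g ((y div x)*x)"
      unfolding Sset_def by (auto intro!: image_eqI[where x="(x,y)"])
    hence "g y / (real (y div x) ^ 2 * g x) \<le> hh g (real ((y div x) * x))"
      unfolding hh_def floor_of_nat nat_int by (simp add: Sset_finite)
    moreover have "real (y div x) ^ 2 * g x > 0" using qp gpos xy by simp
    ultimately show "g y \<le> real (y div x) ^ 2 * hh g (real ((y div x) * x)) * g x"
      by (simp add: divide_le_eq mult_ac)
  next
    show "sub_polynomial (hh g)"
      unfolding sub_polynomial_def
    proof (intro conjI allI impI)
      fix t :: real show "hh g t \<ge> 0" using hh_ge1[of g t] by simp
    next
      fix a :: real assume a: "a > 0"
      have "filterlim (\<lambda>x::real. x powr a) at_top at_top" using a by real_asymp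
      moreover have "\<forall>\<^sub>F x in at_top. x powr a \<le> x powr a * hh g x"
      proof (rule eventually_at_top_linorderI[of 0])
        fix x :: real assume "x \<ge> 0"
        have "x powr a * 1 \<le> x powr a * hh g x" by (intro mult_left_mono hh_ge1) auto
        thus "x powr a \<le> x powr a * hh g x" by simp
      qed
      ultimately show "filterlim (\<lambda>x. x powr a * hh g x) at_top at_top"
        by (rule filterlim_at_top_mono)
    next
      fix a :: real assume a: "a > 0"
      obtain N :: nat where N: "N > 0" and
        NN: "\<And>x y::nat. 0 < x \<and> x < y \<and> y \<ge> N \<Longrightarrow>
          g y \<le> real (y div x) powr (2 + a/2) * real x powr (a/2) * g x"
        using sj a unfolding slow_jumping_def by (meson half_gt_zero)
      have bnd: "hh g t \<le> t powr (a/2)" if t: "t \<ge> real N" for t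
      proof -
        have t1: "t \<ge> 1" using t N by linarith
        define n where "n = nat \<lfloor>t\<rfloor>"
        have nN: "n \<ge> N" unfolding n_def using t by linarith
        have nt: "real n \<le> t" unfolding n_def using t1 by linarith
        have "r \<le> t powr (a/2)" if r: "r \<in> insert 1 (Sset g n)" for r
        proof (cases "r = 1")
          case True thus ?thesis using t1 a by (simp add: ge_one_powr_ge_zero)
        next
          case False
          then obtain x y where xy: "0<x" "x<y" "y \<le> 2*n" "(y div x)*x = n"
            and rr: "r = g y / (real (y div x) ^ 2 * g x)"
            using r unfolding Sset_def by auto
          have "n \<le> y" using xy(4) by (metis div_times_less_eq_dividend)
          hence "r \<le> real ((y div x) * x) powr (a/2)"
            unfolding rr using xy nN by (intro ratio_bound gpos NN) auto
          also have "\<dots> \<le> t powr (a/2)" using xy(4) nt a by (simp add: powr_mono2)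
          finally show ?thesis .
        qed
        thus ?thesis unfolding hh_def n_def[symmetric]
          by (simp add: Sset_finite)
      qed
      have L: "((\<lambda>x::real. x powr (-a/2)) \<longlongrightarrow> 0) at_top" using a by real_asymp
      have E1: "\<forall>\<^sub>F x in at_top. 0 \<le> x powr (-a) * hh g x"
        using hh_ge1[of g] order_trans[OF zero_le_one hh_ge1[of g]] by (auto intro!: eventually_at_top_linorderI[of 0] mult_nonneg_nonneg)
      have E2: "\<forall>\<^sub>F x in at_top. x powr (-a) * hh g x \<le> x powr (-a/2)"
      proof (rule eventually_at_top_linorderI[of "max 1 (real N)"])
        fix x :: real assume x: "x \<ge> max 1 (real N)"
        hence "x powr (-a) * hh g x \<le> x powr (-a) * x powr (a/2)"
          using bnd[of x] by (intro mult_left_mono) auto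
        also have "\<dots> = x powr (-a/2)" using x by (simp add: powr_add[symmetric])
        finally show "x powr (-a) * hh g x \<le> x powr (-a/2)" .
      qed
      show "((\<lambda>x. x powr (-a) * hh g x) \<longlongrightarrow> 0) at_top"
        by (rule tendsto_sandwich[OF E1 E2 tendsto_const L])
    qed
  qed
next
  have gpos: "\<And>x. x > 0 \<Longrightarrow> g x > 0" using assms by (simp add: class_G_def)
  assume "\<exists>h. sub_polynomial h \<and>
       (\<forall>x y::nat. 0 < x \<and> x < y \<longrightarrow>
          g y \<le> real (y div x) ^ 2 * h (real ((y div x) * x)) * g x)"
  then obtain h where sp: "sub_polynomial h" and hb: "\<And>x y::nat. 0 < x \<Longrightarrow> x < y \<Longrightarrow>
          g y \<le> real (y div x) ^ 2 * h (real ((y div x) * x)) * g x" by blast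
  show "slow_jumping g" unfolding slow_jumping_def
  proof (intro allI impI)
    fix a :: real assume a: "a > 0"
    have "((\<lambda>x. x powr (-a) * h x) \<longlongrightarrow> 0) at_top" using sp a unfolding sub_polynomial_def by blast
    hence "\<forall>\<^sub>F x in at_top. x powr (-a) * h x < 1"
      by (rule order_tendstoD) simp
    then obtain M :: real where M: "\<And>t. t \<ge> M \<Longrightarrow> t powr (-a) * h t < 1"
      by (auto simp: eventually_at_top_linorder)
    obtain N :: nat where Nn: "real N \<ge> 2 * max M 1 + 1" by (meson real_arch_simple)
    show "\<exists>N::nat>0. \<forall>x y::nat. 0 < x \<and> x < y \<and> y \<ge> N \<longrightarrow>
        g y \<le> real (y div x) powr (2 + a) * real x powr a * g x"
    proof (intro exI[of _ N] conjI allI impI)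
      show "N > 0" using Nn by (cases N) auto
      fix x y :: nat assume xy: "0 < x \<and> x < y \<and> N \<le> y"
      have q: "y div x \<ge> 1" using xy by (simp add: div_greater_zero_iff Suc_le_eq)
      hence qp: "real (y div x) > 0" by simp
      have "y < (y div x + 1) * x" using xy
        by (metis add.commute div_mult_mod_eq mod_less_divisor mult_Suc nat_add_left_cancel_less plus_1_eq_Suc)
      also have "\<dots> \<le> 2 * ((y div x) * x)" using q by simp
      finally have "real y < 2 * real ((y div x) * x)" by linarith
      hence tM: "real ((y div x) * x) \<ge> max M 1" using Nn xy by linarith
      define t where "t = real ((y div x) * x)"
      have tpos: "t > 0" using tM t_def by linarith
      have "t powr (-a) * h t < 1" using M tM t_def by simp
      hence ht: "h t \<le> t powr a" using tpos
        by (simp add: powr_minus divide_simps mult.commute)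
      have "g y \<le> real (y div x) ^ 2 * h t * g x" using hb xy t_def by blast
      also have "\<dots> \<le> real (y div x) ^ 2 * t powr a * g x"
        using ht gpos[of x] xy by (intro mult_right_mono mult_left_mono) auto
      also have "\<dots> = real (y div x) powr (2 + a) * real x powr a * g x"
        using qp unfolding t_def by (simp add: powr_add powr_realpow powr_mult)
      finally show "g y \<le> real (y div x) powr (2 + a) * real x powr a * g x" .
    qed
  qed
qed

end
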